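(* Let $p$ (true dynamics) and $\hat p$ (learned model) be dynamics kernels, and let $\pi_D$ (data-collecting policy) and $\pi$ be policies. Suppose $$\sup_{t\ge 0}\ \mathbb E_{s\sim d_t^{\pi_D},\,a\sim \pi_D(\cdot\mid s)}\Big[D_{TV}\big(p(\cdot\mid s,a),\hat p(\cdot\mid s,a)\big)\Big]\le \epsilon_m \qquad\text{and}\qquad \sup_{s\in\mathcal S} D_{TV}\big(\pi_D(\cdot\mid s),\pi(\cdot\mid s)\big)\le\epsilon_\pi .$$ Then, writing $\eta[\pi]=\eta(\pi,p)$ and $\hat\eta[\pi]=\eta(\pi,\hat p)$, $$\eta[\pi]\ \ge\ \hat\eta[\pi]-\frac{2\gamma r_{\max}(\epsilon_m+2\epsilon_\pi)}{(1-\gamma)^2}-\frac{4r_{\max}\epsilon_\pi}{1-\gamma}.$$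
   Context: Let $\mathcal S$ and $\mathcal A$ be countable (e.g. finite) state and action spaces, $\rho_0$ a probability distribution on $\mathcal S$ (initial state distribution), $\gamma\in(0,1)$ a discount factor, and $r:\mathcal S\times\mathcal A\to\mathbb R$ a reward function with $|r(s,a)|\le r_{\max}$ for all $(s,a)$. A policy is a Markov kernel $\pi(a\mid s)$ from $\mathcal S$ to $\mathcal A$; a dynamics kernel is a Markov kernel $q(s'\mid s,a)$ from $\mathcal S\times\mathcal A$ to $\mathcal S$. For a policy $\pi$ and dynamics $q$, the return is $\eta(\pi,q)=\sum_{t\ge0}\gamma^t\,\mathbb E[r(s_t,a_t)]$, where $s_0\sim\rho_0$, $a_t\sim\pi(\cdot\mid s_t)$, $s_{t+1}\sim q(\cdot\mid s_t,a_t)$. For probability distributions $\mu,\nu$ on a countable set, $D_{TV}(\mu,\nu)=\frac12\sum_x|\mu(x)-\nu(x)|$. Here $d_t^{\pi_D}$ denotes the distribution of $s_t$ when $s_0\sim\rho_0$, $a_i\sim\pi_D(\cdot\mid s_i)$, $s_{i+1}\sim p(\cdot\mid s_i,a_i)$ (the time-$t$ state marginal of $\pi_D$ under the true dynamics $p$). *)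

theory Defs
  imports "HOL-Probability.Probability"
begin

definition tv_dist :: "'x pmf \<Rightarrow> 'x pmf \<Rightarrow> real" where
  "tv_dist \<mu> \<nu> = (\<Sum>\<^sub>\<infinity>x. \<bar>pmf \<mu> x - pmf \<nu> x\<bar>) / 2"

fun state_marg :: "'s pmf \<Rightarrow> ('s \<Rightarrow> 'a pmf) \<Rightarrow> ('s \<Rightarrow> 'a \<Rightarrow> 's pmf) \<Rightarrow> nat \<Rightarrow> 's pmf" where
  "state_marg \<rho>0 \<pi> q 0 = \<rho>0"
| "state_marg \<rho>0 \<pi> q (Suc t) =
     bind_pmf (state_marg \<rho>0 \<pi> q t) (\<lambda>s. bind_pmf (\<pi> s) (\<lambda>a. q s a))"

definition sa_marg :: "'s pmf \<Rightarrow> ('s \<Rightarrow> 'a pmf) \<Rightarrow> ('s \<Rightarrow> 'a \<Rightarrow> 's pmf) \<Rightarrow> nat \<Rightarrow> ('s \<times> 'a) pmf" where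
  "sa_marg \<rho>0 \<pi> q t = bind_pmf (state_marg \<rho>0 \<pi> q t) (\<lambda>s. map_pmf (\<lambda>a. (s, a)) (\<pi> s))"

definition ret :: "'s pmf \<Rightarrow> real \<Rightarrow> ('s \<Rightarrow> 'a \<Rightarrow> real) \<Rightarrow> ('s \<Rightarrow> 'a pmf) \<Rightarrow> ('s \<Rightarrow> 'a \<Rightarrow> 's pmf) \<Rightarrow> real" where
  "ret \<rho>0 \<gamma> r \<pi> q =
     (\<Sum>t. \<gamma> ^ t * measure_pmf.expectation (sa_marg \<rho>0 \<pi> q t) (\<lambda>(s, a). r s a))"

end

theory Submission
  imports Defs
begin

abbreviation E :: "'x pmf \<Rightarrow> ('x \<Rightarrow> real) \<Rightarrow> real" where
  "E \<mu> h \<equiv> measure_pmf.expectation \<mu> h"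

lemma int_bnd:
  fixes f :: "'x \<Rightarrow> real"
  assumes "\<And>x. \<bar>f x\<bar> \<le> B"
  shows "integrable (measure_pmf \<mu>) f"
  by (rule measure_pmf.integrable_const_bound[where B=B]) (use assms in auto)

lemma exp_bind:
  fixes h :: "'b \<Rightarrow> real"
  assumes "\<And>x. \<bar>h x\<bar> \<le> B"
  shows "E (bind_pmf M N) h = E M (\<lambda>x. E (N x) h)"
  unfolding measure_pmf_bind
  apply (rule integral_bind[where K="count_space UNIV" and B=B and B'=1])
  using assms by (auto simp: measure_pmf.prob_space_axioms prob_space_imp_subprob_space
     measure_pmf.finite_measure_axioms space_subprob_algebra sets_measure_pmf_count_space)

lemma pmf_summable: "pmf \<mu> summable_on A"
  using pmf_abs_summable abs_summable_equivalent abs_summable_summable by blast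

lemma hs_diff:
  fixes f g :: "'x \<Rightarrow> real"
  assumes "(f has_sum a) A" "(g has_sum b) A"
  shows "((\<lambda>x. f x - g x) has_sum (a - b)) A"
proof -
  have "((\<lambda>x. - g x) has_sum (-b)) A" using assms(2) by (simp add: has_sum_uminus)
  from has_sum_add[OF assms(1) this] show ?thesis by simp
qed

lemma exp_hs:
  fixes h :: "'x \<Rightarrow> real"
  assumes "\<And>x. \<bar>h x\<bar> \<le> B"
  shows "((\<lambda>x. pmf \<mu> x * h x) has_sum E \<mu> h) UNIV"
proof -
  have s1: "(\<lambda>x. B * pmf \<mu> x) summable_on UNIV"
    by (intro summable_on_cmult_right pmf_summable)
  have s2: "(\<lambda>x. norm (pmf \<mu> x * h x)) summable_on UNIV"
    by (rule summable_on_comparison_test[OF s1])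
       (auto simp: abs_mult mult.commute intro: mult_right_mono assms)
  have old: "Infinite_Set_Sum.abs_summable_on (\<lambda>x. pmf \<mu> x * h x) UNIV"
    using s2 abs_summable_equivalent by blast
  have "E \<mu> h = infsum (\<lambda>x. pmf \<mu> x * h x) UNIV"
    using pmf_expectation_eq_infsetsum infsetsum_infsum[OF old] by metis
  moreover have "(\<lambda>x. pmf \<mu> x * h x) summable_on UNIV"
    by (rule abs_summable_summable[OF s2])
  ultimately show ?thesis by simp
qed

lemma pmf_hs: "(pmf \<mu> has_sum 1) UNIV"
  using exp_hs[of "\<lambda>_. 1" 1 \<mu>] by simp

lemma tv_pos_hs: "((\<lambda>x. max (pmf \<mu> x - pmf \<nu> x) 0) has_sum tv_dist \<mu> \<nu>) UNIV"
proof -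
  define D where "D x = pmf \<mu> x - pmf \<nu> x" for x
  have hD: "(D has_sum 0) UNIV" unfolding D_def using hs_diff[OF pmf_hs pmf_hs] by simp
  have "(\<lambda>x. max (D x) 0) summable_on UNIV"
    by (rule summable_on_comparison_test[OF pmf_summable[of \<mu>]]) (auto simp: D_def)
  then obtain m where hm: "((\<lambda>x. max (D x) 0) has_sum m) UNIV"
    using has_sum_infsum by blast
  have "((\<lambda>x. 2 * max (D x) 0 - D x) has_sum (2 * m - 0)) UNIV"
    by (rule hs_diff[OF has_sum_cmult_right[OF hm] hD])
  moreover have "(\<lambda>x. 2 * max (D x) 0 - D x) = (\<lambda>x. \<bar>pmf \<mu> x - pmf \<nu> x\<bar>)"
    by (auto simp: D_def fun_eq_iff max_def abs_if)
  ultimately have "((\<lambda>x. \<bar>pmf \<mu> x - pmf \<nu> x\<bar>) has_sum 2 * m) UNIV" by simp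
  then have "tv_dist \<mu> \<nu> = m" unfolding tv_dist_def by (simp add: infsumI)
  then show ?thesis using hm D_def by simp
qed

lemma tv_h:
  assumes "\<And>x. 0 \<le> h x" "\<And>x. h x \<le> 1"
  shows "E \<mu> h - E \<nu> h \<le> tv_dist \<mu> \<nu>"
proof -
  have b: "\<bar>h x\<bar> \<le> 1" for x using assms(1)[of x] assms(2)[of x] by simp
  have "((\<lambda>x. pmf \<mu> x * h x - pmf \<nu> x * h x) has_sum (E \<mu> h - E \<nu> h)) UNIV"
    by (rule hs_diff[OF exp_hs exp_hs]; rule b)
  then show ?thesis
  proof (rule has_sum_mono[OF _ tv_pos_hs])
    fix x
    have *: "c * d \<le> max d 0" if "0 \<le> c" "c \<le> 1" for c d :: real
    proof (cases "d \<ge> 0")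
      case True then show ?thesis using mult_right_mono[OF that(2) True] by simp
    next
      case False then show ?thesis using mult_nonneg_nonpos[OF that(1), of d] by simp
    qed
    show "pmf \<mu> x * h x - pmf \<nu> x * h x \<le> max (pmf \<mu> x - pmf \<nu> x) 0"
      using *[OF assms(1)[of x] assms(2)[of x], of "pmf \<mu> x - pmf \<nu> x"]
      by (simp add: algebra_simps)
  qed
qed

lemma tv_achieve:
  "\<exists>h. (\<forall>x. 0 \<le> h x \<and> h x \<le> 1) \<and> tv_dist \<mu> \<nu> = E \<mu> h - E \<nu> h"
proof -
  define h where "h x = (if pmf \<mu> x - pmf \<nu> x > 0 then 1 else 0::real)" for x
  have b: "\<And>x. \<bar>h x\<bar> \<le> 1" by (simp add: h_def)
  have "((\<lambda>x. pmf \<mu> x * h x - pmf \<nu> x * h x) has_sum (E \<mu> h - E \<nu> h)) UNIV"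
    by (rule hs_diff[OF exp_hs exp_hs]; rule b)
  moreover have "(\<lambda>x. pmf \<mu> x * h x - pmf \<nu> x * h x) = (\<lambda>x. max (pmf \<mu> x - pmf \<nu> x) 0)"
    by (auto simp: h_def fun_eq_iff max_def)
  ultimately have "((\<lambda>x. max (pmf \<mu> x - pmf \<nu> x) 0) has_sum (E \<mu> h - E \<nu> h)) UNIV"
    by simp
  from has_sum_unique[OF tv_pos_hs this] have t: "tv_dist \<mu> \<nu> = E \<mu> h - E \<nu> h" .
  have hb: "\<forall>x. 0 \<le> h x \<and> h x \<le> 1" by (simp add: h_def)
  show ?thesis by (rule exI[of _ h], rule conjI[OF hb t])
qed

lemma tv_nonneg: "0 \<le> tv_dist \<mu> \<nu>"
  using tv_h[of "\<lambda>_. 0" \<mu> \<nu>] by simp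

lemma exp_01:
  assumes "\<And>x. 0 \<le> h x" "\<And>x. h x \<le> 1"
  shows "0 \<le> E \<mu> h \<and> E \<mu> h \<le> 1"
proof -
  have b: "\<bar>h x\<bar> \<le> 1" for x using assms(1)[of x] assms(2)[of x] by simp
  have hs: "((\<lambda>x. pmf \<mu> x * h x) has_sum E \<mu> h) UNIV" by (rule exp_hs[OF b])
  have "0 \<le> E \<mu> h"
    by (rule has_sum_mono[OF has_sum_0_simp hs]) (simp add: assms(1))
  moreover have "E \<mu> h \<le> 1"
    by (rule has_sum_mono[OF hs pmf_hs[of \<mu>]]) (simp add: assms(2) mult_left_le)
  ultimately show ?thesis by simp
qed

lemma tv_le1: "tv_dist \<mu> \<nu> \<le> 1"
proof -
  obtain h where h: "\<forall>x. 0 \<le> h x \<and> h x \<le> 1" "tv_dist \<mu> \<nu> = E \<mu> h - E \<nu> h"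
    using tv_achieve[of \<mu> \<nu>] by blast
  have h0: "\<And>x. 0 \<le> h x" "\<And>x. h x \<le> 1" using h(1) by auto
  have a: "E \<mu> h \<le> 1" using exp_01[OF h0, of \<mu>] by simp
  have b: "0 \<le> E \<nu> h" using exp_01[OF h0, of \<nu>] by simp
  show ?thesis using a b h(2) by linarith
qed

lemma tv_sym: "tv_dist \<mu> \<nu> = tv_dist \<nu> \<mu>"
proof -
  have "(\<lambda>x. \<bar>pmf \<mu> x - pmf \<nu> x\<bar>) = (\<lambda>x. \<bar>pmf \<nu> x - pmf \<mu> x\<bar>)"
    by (rule ext, rule abs_minus_commute)
  then show ?thesis unfolding tv_dist_def by (simp only:)
qed

lemma tv_tri: "tv_dist \<mu> \<rho> \<le> tv_dist \<mu> \<nu> + tv_dist \<nu> \<rho>"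
proof -
  obtain h where h: "\<forall>x. 0 \<le> h x \<and> h x \<le> 1" "tv_dist \<mu> \<rho> = E \<mu> h - E \<rho> h"
    using tv_achieve[of \<mu> \<rho>] by blast
  have h0: "\<And>x. 0 \<le> h x" "\<And>x. h x \<le> 1" using h(1) by auto
  have a: "E \<mu> h - E \<nu> h \<le> tv_dist \<mu> \<nu>" by (rule tv_h[OF h0])
  have b: "E \<nu> h - E \<rho> h \<le> tv_dist \<nu> \<rho>" by (rule tv_h[OF h0])
  show ?thesis using a b h(2) by linarith
qed

lemma tv_bind_same:
  "tv_dist (bind_pmf M f) (bind_pmf M g) \<le> E M (\<lambda>y. tv_dist (f y) (g y))"
proof -
  obtain h where h: "\<forall>x. 0 \<le> h x \<and> h x \<le> 1"
    "tv_dist (bind_pmf M f) (bind_pmf M g) = E (bind_pmf M f) h - E (bind_pmf M g) h"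
    using tv_achieve[of "bind_pmf M f" "bind_pmf M g"] by blast
  have h0: "\<And>x. 0 \<le> h x" "\<And>x. h x \<le> 1" using h(1) by auto
  have hb: "\<bar>h x\<bar> \<le> 1" for x using h0(1)[of x] h0(2)[of x] by simp
  have bf: "\<bar>E (f y) h\<bar> \<le> 1" for y using exp_01[OF h0, of "f y"] by auto
  have bg: "\<bar>E (g y) h\<bar> \<le> 1" for y using exp_01[OF h0, of "g y"] by auto
  have "tv_dist (bind_pmf M f) (bind_pmf M g) = E M (\<lambda>y. E (f y) h) - E M (\<lambda>y. E (g y) h)"
    using h(2) exp_bind[OF hb, of M f] exp_bind[OF hb, of M g] by simp
  also have "\<dots> = E M (\<lambda>y. E (f y) h - E (g y) h)"
    using Bochner_Integration.integral_diff[OF int_bnd[of "\<lambda>y. E (f y) h" 1 M, OF bf] int_bnd[of "\<lambda>y. E (g y) h" 1 M, OF bg]]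
    by simp
  also have "\<dots> \<le> E M (\<lambda>y. tv_dist (f y) (g y))"
  proof (rule integral_mono)
    show "integrable (measure_pmf M) (\<lambda>y. E (f y) h - E (g y) h)"
    proof (rule int_bnd[where B=2])
      fix y show "\<bar>E (f y) h - E (g y) h\<bar> \<le> 2" using bf[of y] bg[of y] by linarith
    qed
    show "integrable (measure_pmf M) (\<lambda>y. tv_dist (f y) (g y))"
      by (rule int_bnd[where B=1]) (smt (verit) tv_nonneg tv_le1)
    show "E (f y) h - E (g y) h \<le> tv_dist (f y) (g y)" for y by (rule tv_h[OF h0])
  qed
  finally show ?thesis .
qed

lemma tv_bind_kernel:
  "tv_dist (bind_pmf \<mu> f) (bind_pmf \<nu> f) \<le> tv_dist \<mu> \<nu>"
proof -
  obtain h where h: "\<forall>x. 0 \<le> h x \<and> h x \<le> 1"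
    "tv_dist (bind_pmf \<mu> f) (bind_pmf \<nu> f) = E (bind_pmf \<mu> f) h - E (bind_pmf \<nu> f) h"
    using tv_achieve[of "bind_pmf \<mu> f" "bind_pmf \<nu> f"] by blast
  have h0: "\<And>x. 0 \<le> h x" "\<And>x. h x \<le> 1" using h(1) by auto
  have hb: "\<bar>h x\<bar> \<le> 1" for x using h0(1)[of x] h0(2)[of x] by simp
  have k0: "0 \<le> E (f y) h" "E (f y) h \<le> 1" for y using exp_01[OF h0, of "f y"] by auto
  have "tv_dist (bind_pmf \<mu> f) (bind_pmf \<nu> f) = E \<mu> (\<lambda>y. E (f y) h) - E \<nu> (\<lambda>y. E (f y) h)"
    using h(2) exp_bind[OF hb, of \<mu> f] exp_bind[OF hb, of \<nu> f] by simp
  also have "\<dots> \<le> tv_dist \<mu> \<nu>" by (rule tv_h; rule k0)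
  finally show ?thesis .
qed

lemma tv_map: "tv_dist (map_pmf g \<mu>) (map_pmf g \<nu>) \<le> tv_dist \<mu> \<nu>"
  unfolding map_pmf_def by (rule tv_bind_kernel)

lemma exp_diff_bound:
  fixes h :: "'x \<Rightarrow> real"
  assumes hB: "\<And>x. \<bar>h x\<bar> \<le> B"
  shows "E \<mu> h - E \<nu> h \<le> 2 * B * tv_dist \<mu> \<nu>"
proof -
  have B0: "0 \<le> B" using hB[of undefined] by simp
  show ?thesis
  proof (cases "B = 0")
    case True
    then have "h = (\<lambda>_. 0)" using hB by (simp add: fun_eq_iff)
    then show ?thesis using True by simp
  next
    case False
    then have Bp: "B > 0" using B0 by simp
    define k where "k x = (h x + B) / (2 * B)" for x
    have k0: "0 \<le> k x" "k x \<le> 1" for x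
      using hB[of x] Bp by (auto simp: k_def field_simps abs_le_iff)
    have int: "integrable (measure_pmf \<rho>) h" for \<rho> by (rule int_bnd[OF hB])
    have Ek: "E \<rho> k = (E \<rho> h + B) / (2 * B)" for \<rho>
    proof -
      have "E \<rho> k = E \<rho> (\<lambda>x. h x + B) / (2 * B)"
        unfolding k_def by (rule integral_divide_zero)
      also have "E \<rho> (\<lambda>x. h x + B) = E \<rho> h + B"
        using int[of \<rho>] by (simp add: integral_add)
      finally show ?thesis .
    qed
    have "E \<mu> k - E \<nu> k \<le> tv_dist \<mu> \<nu>" by (rule tv_h; rule k0)
    moreover have "E \<mu> k - E \<nu> k = (E \<mu> h - E \<nu> h) / (2 * B)"
      unfolding Ek using Bp by (simp add: field_simps)
    ultimately have "(E \<mu> h - E \<nu> h) / (2 * B) \<le> tv_dist \<mu> \<nu>" by simp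
    then show ?thesis using Bp by (simp add: field_simps)
  qed
qed

lemma exp_le_const:
  fixes f :: "'x \<Rightarrow> real"
  assumes "\<And>y. f y \<le> c" "\<And>y. \<bar>f y\<bar> \<le> B"
  shows "E \<mu> f \<le> c"
proof -
  have "E \<mu> f \<le> E \<mu> (\<lambda>_. c)"
    by (rule integral_mono[OF int_bnd[OF assms(2)] int_bnd[of _ "\<bar>c\<bar>"]]) (use assms(1) in auto)
  then show ?thesis by simp
qed

lemma tv_b: "\<bar>tv_dist \<mu> \<nu>\<bar> \<le> 1"
  using tv_nonneg[of \<mu> \<nu>] tv_le1[of \<mu> \<nu>] by simp

lemma J1:
  fixes \<pi>1 \<pi>2 :: "'s \<Rightarrow> 'a pmf"
  assumes "\<And>s. tv_dist (\<pi>1 s) (\<pi>2 s) \<le> \<epsilon>"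
  shows "tv_dist (bind_pmf d (\<lambda>s. map_pmf (\<lambda>a. (s, a)) (\<pi>1 s)))
                 (bind_pmf c (\<lambda>s. map_pmf (\<lambda>a. (s, a)) (\<pi>2 s))) \<le> tv_dist d c + \<epsilon>"
proof -
  let ?F1 = "\<lambda>s. map_pmf (\<lambda>a. (s, a)) (\<pi>1 s)"
  let ?F2 = "\<lambda>s. map_pmf (\<lambda>a. (s, a)) (\<pi>2 s)"
  have a: "tv_dist (bind_pmf d ?F1) (bind_pmf c ?F1) \<le> tv_dist d c" by (rule tv_bind_kernel)
  have "tv_dist (bind_pmf c ?F1) (bind_pmf c ?F2) \<le> E c (\<lambda>s. tv_dist (?F1 s) (?F2 s))"
    by (rule tv_bind_same)
  also have "\<dots> \<le> \<epsilon>"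
  proof (rule exp_le_const[OF _ tv_b])
    fix s show "tv_dist (?F1 s) (?F2 s) \<le> \<epsilon>" using tv_map[of "\<lambda>a. (s, a)" "\<pi>1 s" "\<pi>2 s"] assms[of s] by linarith
  qed
  finally show ?thesis using a tv_tri[of "bind_pmf d ?F1" "bind_pmf c ?F2" "bind_pmf c ?F1"] by linarith
qed

lemma J3:
  fixes \<pi>1 \<pi>2 :: "'s \<Rightarrow> 'a pmf"
  assumes "\<And>s. tv_dist (\<pi>1 s) (\<pi>2 s) \<le> \<epsilon>"
  shows "tv_dist (state_marg \<rho> \<pi>1 q t) (state_marg \<rho> \<pi>2 q t) \<le> real t * \<epsilon>"
proof (induction t)
  case 0 then show ?case using tv_nonneg[of \<rho> \<rho>] tv_h[of "\<lambda>_. 0" \<rho> \<rho>]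
    by (simp add: tv_dist_def)
next
  case (Suc t)
  let ?d = "state_marg \<rho> \<pi>1 q t" and ?c = "state_marg \<rho> \<pi>2 q t"
  let ?K1 = "\<lambda>s. bind_pmf (\<pi>1 s) (q s)" and ?K2 = "\<lambda>s. bind_pmf (\<pi>2 s) (q s)"
  have a: "tv_dist (bind_pmf ?d ?K1) (bind_pmf ?c ?K1) \<le> tv_dist ?d ?c" by (rule tv_bind_kernel)
  have "tv_dist (bind_pmf ?c ?K1) (bind_pmf ?c ?K2) \<le> E ?c (\<lambda>s. tv_dist (?K1 s) (?K2 s))"
    by (rule tv_bind_same)
  also have "\<dots> \<le> \<epsilon>"
  proof (rule exp_le_const[OF _ tv_b])
    fix s show "tv_dist (?K1 s) (?K2 s) \<le> \<epsilon>"
      using tv_bind_kernel[of "\<pi>1 s" "q s" "\<pi>2 s"] assms[of s] by linarith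
  qed
  finally have "tv_dist (bind_pmf ?d ?K1) (bind_pmf ?c ?K2) \<le> real t * \<epsilon> + \<epsilon>"
    using a Suc.IH tv_tri[of "bind_pmf ?d ?K1" "bind_pmf ?c ?K2" "bind_pmf ?c ?K1"] by linarith
  then show ?case by (simp add: algebra_simps)
qed

lemma J2:
  fixes \<pi>D \<pi> :: "'s \<Rightarrow> 'a pmf" and p phat :: "'s \<Rightarrow> 'a \<Rightarrow> 's pmf"
  assumes m: "\<And>t. E (sa_marg \<rho> \<pi>D p t) (\<lambda>(s, a). tv_dist (p s a) (phat s a)) \<le> \<epsilon>m"
    and pi: "\<And>s. tv_dist (\<pi>D s) (\<pi> s) \<le> \<epsilon>\<pi>"
  shows "tv_dist (state_marg \<rho> \<pi>D p t) (state_marg \<rho> \<pi> phat t) \<le> real t * (\<epsilon>m + \<epsilon>\<pi>)"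
proof (induction t)
  case 0 then show ?case by (simp add: tv_dist_def)
next
  case (Suc t)
  let ?c = "state_marg \<rho> \<pi>D p t" and ?e = "state_marg \<rho> \<pi> phat t"
  let ?K1 = "\<lambda>s. bind_pmf (\<pi>D s) (p s)" and ?K2 = "\<lambda>s. bind_pmf (\<pi> s) (phat s)"
  let ?g = "\<lambda>s a. tv_dist (p s a) (phat s a)"
  have a: "tv_dist (bind_pmf ?c ?K2) (bind_pmf ?e ?K2) \<le> tv_dist ?c ?e" by (rule tv_bind_kernel)
  have ks: "tv_dist (?K1 s) (?K2 s) \<le> E (\<pi>D s) (?g s) + \<epsilon>\<pi>" for s
  proof -
    have "tv_dist (?K1 s) (bind_pmf (\<pi>D s) (phat s)) \<le> E (\<pi>D s) (?g s)" by (rule tv_bind_same)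
    moreover have "tv_dist (bind_pmf (\<pi>D s) (phat s)) (?K2 s) \<le> \<epsilon>\<pi>"
      using tv_bind_kernel[of "\<pi>D s" "phat s" "\<pi> s"] pi[of s] by linarith
    ultimately show ?thesis using tv_tri[of "?K1 s" "?K2 s" "bind_pmf (\<pi>D s) (phat s)"] by linarith
  qed
  have gb: "\<bar>(\<lambda>(s, a). ?g s a) x\<bar> \<le> 1" for x by (cases x) (simp add: tv_b)
  have Eb: "\<bar>E (\<pi>D s) (?g s)\<bar> \<le> 1" for s
    using exp_01[of "?g s" "\<pi>D s", OF tv_nonneg tv_le1] by (simp add: abs_le_iff)
  have eq: "E ?c (\<lambda>s. E (\<pi>D s) (?g s)) = E (sa_marg \<rho> \<pi>D p t) (\<lambda>(s, a). ?g s a)"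
    unfolding sa_marg_def by (subst exp_bind[OF gb]) simp
  have "tv_dist (bind_pmf ?c ?K1) (bind_pmf ?c ?K2) \<le> E ?c (\<lambda>s. tv_dist (?K1 s) (?K2 s))"
    by (rule tv_bind_same)
  also have "\<dots> \<le> E ?c (\<lambda>s. E (\<pi>D s) (?g s) + \<epsilon>\<pi>)"
    by (rule integral_mono[OF int_bnd[OF tv_b] int_bnd[of _ "1 + \<bar>\<epsilon>\<pi>\<bar>"]])
       (use ks Eb in \<open>auto intro: order.trans[OF abs_triangle_ineq] add_mono\<close>)
  also have "\<dots> = E ?c (\<lambda>s. E (\<pi>D s) (?g s)) + \<epsilon>\<pi>"
    using int_bnd[of "\<lambda>s. E (\<pi>D s) (?g s)" 1 ?c, OF Eb] by (simp add: integral_add)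
  also have "\<dots> \<le> \<epsilon>m + \<epsilon>\<pi>" using eq m[of t] by simp
  finally have "tv_dist (bind_pmf ?c ?K1) (bind_pmf ?e ?K2) \<le> real t * (\<epsilon>m + \<epsilon>\<pi>) + (\<epsilon>m + \<epsilon>\<pi>)"
    using a Suc.IH tv_tri[of "bind_pmf ?c ?K1" "bind_pmf ?e ?K2" "bind_pmf ?c ?K2"] by linarith
  then show ?case by (simp add: algebra_simps)
qed

lemma exp_abs_le:
  fixes f :: "'x \<Rightarrow> real"
  assumes "\<And>y. \<bar>f y\<bar> \<le> B"
  shows "\<bar>E \<mu> f\<bar> \<le> B"
proof -
  have "E \<mu> f \<le> B" by (rule exp_le_const[OF _ assms]) (use assms in \<open>simp add: abs_le_iff\<close>)
  moreover have "E \<mu> (\<lambda>x. - f x) \<le> B"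
    by (rule exp_le_const[of _ _ B]) (use assms in \<open>simp_all add: abs_le_iff\<close>)
  ultimately show ?thesis by (simp add: abs_le_iff)
qed

theorem theorem1:
  fixes \<rho>0 :: "'s::countable pmf"
    and \<gamma> rmax \<epsilon>m \<epsilon>\<pi> :: real
    and r :: "'s \<Rightarrow> 'a::countable \<Rightarrow> real"
    and p phat :: "'s \<Rightarrow> 'a \<Rightarrow> 's pmf"
    and \<pi>D \<pi> :: "'s \<Rightarrow> 'a pmf"
  assumes "0 < \<gamma>" and "\<gamma> < 1"
    and "\<And>s a. \<bar>r s a\<bar> \<le> rmax"
    and "\<And>t. measure_pmf.expectation (sa_marg \<rho>0 \<pi>D p t)
                 (\<lambda>(s, a). tv_dist (p s a) (phat s a)) \<le> \<epsilon>m"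
    and "\<And>s. tv_dist (\<pi>D s) (\<pi> s) \<le> \<epsilon>\<pi>"
  shows "ret \<rho>0 \<gamma> r \<pi> p \<ge> ret \<rho>0 \<gamma> r \<pi> phat
           - 2 * \<gamma> * rmax * (\<epsilon>m + 2 * \<epsilon>\<pi>) / (1 - \<gamma>)^2
           - 4 * rmax * \<epsilon>\<pi> / (1 - \<gamma>)"
proof -
  have rb: "\<bar>(\<lambda>(s, a). r s a) x\<bar> \<le> rmax" for x by (cases x) (simp add: assms(3))
  have rmax0: "0 \<le> rmax" using assms(3)[of undefined undefined] by simp
  have pi': "\<And>s. tv_dist (\<pi> s) (\<pi>D s) \<le> \<epsilon>\<pi>" using assms(5) tv_sym by metis
  define a where "a t = E (sa_marg \<rho>0 \<pi> p t) (\<lambda>(s, a). r s a)" for t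
  define b where "b t = E (sa_marg \<rho>0 \<pi> phat t) (\<lambda>(s, a). r s a)" for t
  define C where "C = \<epsilon>m + 2 * \<epsilon>\<pi>"
  have Tb: "tv_dist (sa_marg \<rho>0 \<pi> phat t) (sa_marg \<rho>0 \<pi> p t) \<le> real t * C + 2 * \<epsilon>\<pi>" for t
  proof -
    have 1: "tv_dist (sa_marg \<rho>0 \<pi> p t) (sa_marg \<rho>0 \<pi>D p t)
        \<le> tv_dist (state_marg \<rho>0 \<pi> p t) (state_marg \<rho>0 \<pi>D p t) + \<epsilon>\<pi>"
      unfolding sa_marg_def by (rule J1[OF pi'])
    have 2: "tv_dist (sa_marg \<rho>0 \<pi>D p t) (sa_marg \<rho>0 \<pi> phat t)
        \<le> tv_dist (state_marg \<rho>0 \<pi>D p t) (state_marg \<rho>0 \<pi> phat t) + \<epsilon>\<pi>"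
      unfolding sa_marg_def by (rule J1[OF assms(5)])
    have 3: "tv_dist (state_marg \<rho>0 \<pi> p t) (state_marg \<rho>0 \<pi>D p t) \<le> real t * \<epsilon>\<pi>"
      by (rule J3[OF pi'])
    have 4: "tv_dist (state_marg \<rho>0 \<pi>D p t) (state_marg \<rho>0 \<pi> phat t) \<le> real t * (\<epsilon>m + \<epsilon>\<pi>)"
      by (rule J2[OF assms(4) assms(5)])
    have 5: "tv_dist (sa_marg \<rho>0 \<pi> p t) (sa_marg \<rho>0 \<pi> phat t)
       \<le> tv_dist (sa_marg \<rho>0 \<pi> p t) (sa_marg \<rho>0 \<pi>D p t) + tv_dist (sa_marg \<rho>0 \<pi>D p t) (sa_marg \<rho>0 \<pi> phat t)"
      by (rule tv_tri)
    have 6: "real t * \<epsilon>\<pi> + real t * (\<epsilon>m + \<epsilon>\<pi>) = real t * C" by (simp add: C_def algebra_simps)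
    show ?thesis using 1 2 3 4 5 6 tv_sym[of "sa_marg \<rho>0 \<pi> phat t" "sa_marg \<rho>0 \<pi> p t"] by linarith
  qed
  have dif: "\<gamma> ^ t * b t - \<gamma> ^ t * a t \<le> \<gamma> ^ t * (2 * rmax * (real t * C + 2 * \<epsilon>\<pi>))" for t
  proof -
    have "b t - a t \<le> 2 * rmax * tv_dist (sa_marg \<rho>0 \<pi> phat t) (sa_marg \<rho>0 \<pi> p t)"
      unfolding a_def b_def by (rule exp_diff_bound[OF rb])
    also have "\<dots> \<le> 2 * rmax * (real t * C + 2 * \<epsilon>\<pi>)"
      by (rule mult_left_mono[OF Tb]) (use rmax0 in simp)
    finally have "b t - a t \<le> 2 * rmax * (real t * C + 2 * \<epsilon>\<pi>)" .
    then have "\<gamma> ^ t * (b t - a t) \<le> \<gamma> ^ t * (2 * rmax * (real t * C + 2 * \<epsilon>\<pi>))"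
      by (rule mult_left_mono) (use assms(1) in simp)
    then show ?thesis by (simp add: algebra_simps)
  qed
  have g1: "norm \<gamma> < 1" using assms(1,2) by simp
  have geo: "(\<lambda>n. \<gamma> ^ n) sums (1 / (1 - \<gamma>))" by (rule geometric_sums[OF g1])
  have sumg: "summable (\<lambda>n. rmax * \<gamma> ^ n)" using geo by (intro summable_mult) (simp add: sums_iff)
  have sa: "summable (\<lambda>t. \<gamma> ^ t * a t)"
  proof (rule summable_comparison_test'[OF sumg])
    fix n
    have "\<bar>a n\<bar> \<le> rmax" unfolding a_def by (rule exp_abs_le[OF rb])
    then show "norm (\<gamma> ^ n * a n) \<le> rmax * \<gamma> ^ n"
      using assms(1) by (simp add: abs_mult mult.commute mult_right_mono)
  qed
  have sb: "summable (\<lambda>t. \<gamma> ^ t * b t)"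
  proof (rule summable_comparison_test'[OF sumg])
    fix n
    have "\<bar>b n\<bar> \<le> rmax" unfolding b_def by (rule exp_abs_le[OF rb])
    then show "norm (\<gamma> ^ n * b n) \<le> rmax * \<gamma> ^ n"
      using assms(1) by (simp add: abs_mult mult.commute mult_right_mono)
  qed
  have h1: "(\<lambda>n. of_nat (Suc n) * \<gamma> ^ n) sums (1 / (1 - \<gamma>)^2)"
    by (rule geometric_deriv_sums[OF g1])
  have h2: "(\<lambda>n. \<gamma> * (of_nat (Suc n) * \<gamma> ^ n)) sums (\<gamma> * (1 / (1 - \<gamma>)^2))"
    by (rule sums_mult[OF h1])
  have h3: "(\<lambda>n. real n * \<gamma> ^ n) sums (\<gamma> / (1 - \<gamma>)^2)"
  proof -
    have "(\<lambda>n. real (Suc n) * \<gamma> ^ Suc n) sums (\<gamma> / (1 - \<gamma>)^2)"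
      using h2 by (simp add: algebra_simps)
    then show ?thesis using sums_Suc_iff[of "\<lambda>n. real n * \<gamma> ^ n"] by simp
  qed
  define S where "S = 2 * rmax * C * (\<gamma> / (1 - \<gamma>)^2) + 4 * rmax * \<epsilon>\<pi> * (1 / (1 - \<gamma>))"
  have hS: "(\<lambda>t. \<gamma> ^ t * (2 * rmax * (real t * C + 2 * \<epsilon>\<pi>))) sums S"
  proof -
    have "(\<lambda>n. 2 * rmax * C * (real n * \<gamma> ^ n) + 4 * rmax * \<epsilon>\<pi> * \<gamma> ^ n) sums S"
      unfolding S_def by (intro sums_add sums_mult h3 geo)
    then show ?thesis by (simp add: algebra_simps)
  qed
  have "ret \<rho>0 \<gamma> r \<pi> phat - ret \<rho>0 \<gamma> r \<pi> p = (\<Sum>t. \<gamma> ^ t * b t) - (\<Sum>t. \<gamma> ^ t * a t)"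
    unfolding ret_def a_def b_def ..
  also have "\<dots> = (\<Sum>t. \<gamma> ^ t * b t - \<gamma> ^ t * a t)" by (rule suminf_diff[OF sb sa])
  also have "\<dots> \<le> (\<Sum>t. \<gamma> ^ t * (2 * rmax * (real t * C + 2 * \<epsilon>\<pi>)))"
    by (rule suminf_le[OF dif]) (use sa sb hS in \<open>auto simp: sums_iff intro: summable_diff\<close>)
  also have "\<dots> = S" using hS by (simp add: sums_iff)
  finally have "ret \<rho>0 \<gamma> r \<pi> phat - ret \<rho>0 \<gamma> r \<pi> p \<le> S" .
  moreover have "S = 2 * \<gamma> * rmax * (\<epsilon>m + 2 * \<epsilon>\<pi>) / (1 - \<gamma>)^2 + 4 * rmax * \<epsilon>\<pi> / (1 - \<gamma>)"
    unfolding S_def C_def by (simp add: field_simps)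
  ultimately show ?thesis by linarith
qed

end
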